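(* Let $\varphi,\psi\in G$ satisfy $\lim_{t\to 0+}\psi(t)/\varphi(t)=0$, and let $F$ be a symmetric space on $[0,1]$ whose fundamental function is $\psi$. Then $\Lambda(\varphi)\subset F$ and the identity inclusion operator $I:\Lambda(\varphi)\to F$ is disjointly strictly singular.
   Context: All functions are Lebesgue measurable on $[0,1]$, $\mu$ is Lebesgue measure, and $x^*$ denotes the decreasing left-continuous rearrangement of $|x|$. A symmetric space (SS) on $[0,1]$ is a Banach space $E$ of measurable functions on $[0,1]$ such that: (1) if $y\in E$ and $|x(t)|\le |y(t)|$ then $x\in E$ and $\|x\|\le\|y\|$; (2) if $y\in E$ and $x,y$ are equimeasurable (i.e. $\mu\{|x|>\tau\}=\mu\{|y|>\tau\}$ for all $\tau>0$) then $x\in E$ and $\|x\|=\|y\|$. The fundamental function of $E$ is $f_E(t)=\|\chi_{(0,t)}\|_E$. $G$ denotes the class of all positive increasing concave functions on $(0,1]$. For $\varphi\in G$, the Lorentz space $\Lambda(\varphi)$ consists of all measurable $x$ with $\|x\|_{\Lambda(\varphi)}=\int_0^1 x^*(s)\,d\varphi(s)<\infty$. A bounded linear operator $T$ from a Banach lattice $X$ into a Banach space $Y$ is disjointly strictly singular (DSS) if there is no sequence of nonzero pairwise disjoint elements $x_n\in X$ such that the restriction of $T$ to their closed linear span $[x_n]$ is an isomorphism (onto its image). *)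

theory Defs
  imports "HOL-Analysis.Analysis"
begin

definition meas01 :: "(real \<Rightarrow> real) \<Rightarrow> bool" where
  "meas01 x \<longleftrightarrow> x \<in> borel_measurable (lebesgue_on {0..1})"

definition distr01 :: "(real \<Rightarrow> real) \<Rightarrow> ennreal \<Rightarrow> ennreal" where
  "distr01 x \<tau> = emeasure lebesgue {t \<in> {0..1}. ennreal \<bar>x t\<bar> > \<tau>}"

text \<open>Decreasing left-continuous rearrangement of |x| (values in [0,\<infinity>]);
  at t = 0 it is the essential supremum (the limit x*(0+)).\<close>
definition rearr :: "(real \<Rightarrow> real) \<Rightarrow> real \<Rightarrow> ennreal" where
  "rearr x t = (if t \<le> 0 then Inf {\<tau>. distr01 x \<tau> = 0}
                else Inf {\<tau>. distr01 x \<tau> < ennreal t})"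

definition equimeasurable :: "(real \<Rightarrow> real) \<Rightarrow> (real \<Rightarrow> real) \<Rightarrow> bool" where
  "equimeasurable x y \<longleftrightarrow>
     (\<forall>\<tau>::real. \<tau> > 0 \<longrightarrow>
        emeasure lebesgue {t \<in> {0..1}. \<bar>x t\<bar> > \<tau>} = emeasure lebesgue {t \<in> {0..1}. \<bar>y t\<bar> > \<tau>})"

definition classG :: "(real \<Rightarrow> real) \<Rightarrow> bool" where
  "classG \<phi> \<longleftrightarrow> (\<forall>t\<in>{0<..1}. \<phi> t > 0) \<and> mono_on {0<..1} \<phi> \<and> concave_on {0<..1} \<phi>"

text \<open>Extension of \<phi> to a nondecreasing right-continuous function on the reals,
  with the convention \<phi>(0) = 0: the Stieltjes measure d\<phi> on [0,1] then carries
  the atom \<phi>(0+) at 0 (standard Krein-Petunin-Semenov convention).\<close>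
definition phi_ext :: "(real \<Rightarrow> real) \<Rightarrow> real \<Rightarrow> real" where
  "phi_ext \<phi> t = (if t < 0 then 0
                  else if t = 0 then Inf (\<phi> ` {0<..1})
                  else if t \<le> 1 then \<phi> t else \<phi> 1)"

definition lorentz_norm :: "(real \<Rightarrow> real) \<Rightarrow> (real \<Rightarrow> real) \<Rightarrow> ennreal" where
  "lorentz_norm \<phi> x = (\<integral>\<^sup>+ s. rearr x s * indicator {0..1} s \<partial>interval_measure (phi_ext \<phi>))"

definition lorentz_space :: "(real \<Rightarrow> real) \<Rightarrow> (real \<Rightarrow> real) set" where
  "lorentz_space \<phi> = {x. meas01 x \<and> lorentz_norm \<phi> x < \<infinity>}"

text \<open>Symmetric space (E, N) on [0,1]: a Banach space of (classes of a.e. equal)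
  measurable functions, with the ideal property and rearrangement invariance.\<close>
definition symmetric_space :: "(real \<Rightarrow> real) set \<Rightarrow> ((real \<Rightarrow> real) \<Rightarrow> real) \<Rightarrow> bool" where
  "symmetric_space E N \<longleftrightarrow>
     (\<forall>x\<in>E. meas01 x) \<and>
     (\<lambda>t. 0) \<in> E \<and>
     (\<forall>x\<in>E. \<forall>y\<in>E. (\<lambda>t. x t + y t) \<in> E) \<and>
     (\<forall>x\<in>E. \<forall>c. (\<lambda>t. c * x t) \<in> E) \<and>
     (\<forall>x\<in>E. \<forall>y\<in>E. N (\<lambda>t. x t + y t) \<le> N x + N y) \<and>
     (\<forall>x\<in>E. \<forall>c. N (\<lambda>t. c * x t) = \<bar>c\<bar> * N x) \<and>
     (\<forall>x\<in>E. N x \<ge> 0) \<and>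
     (\<forall>x\<in>E. N x = 0 \<longleftrightarrow> (AE t in lebesgue_on {0..1}. x t = 0)) \<and>
     (\<forall>xs. (\<forall>n. xs n \<in> E) \<and>
           (\<forall>e>0. \<exists>M. \<forall>m\<ge>M. \<forall>n\<ge>M. N (\<lambda>t. xs m t - xs n t) < e)
           \<longrightarrow> (\<exists>x\<in>E. (\<lambda>n. N (\<lambda>t. xs n t - x t)) \<longlonglongrightarrow> 0)) \<and>
     (\<forall>x y. y \<in> E \<and> meas01 x \<and> (\<forall>t\<in>{0..1}. \<bar>x t\<bar> \<le> \<bar>y t\<bar>) \<longrightarrow> x \<in> E \<and> N x \<le> N y) \<and>
     (\<forall>x y. y \<in> E \<and> meas01 x \<and> equimeasurable x y \<longrightarrow> x \<in> E \<and> N x = N y)"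

definition has_fundamental_function ::
    "(real \<Rightarrow> real) set \<Rightarrow> ((real \<Rightarrow> real) \<Rightarrow> real) \<Rightarrow> (real \<Rightarrow> real) \<Rightarrow> bool" where
  "has_fundamental_function E N \<psi> \<longleftrightarrow>
     (\<forall>t\<in>{0<..1}. indicator {0<..<t} \<in> E \<and> N (indicator {0<..<t}) = \<psi> t)"

definition lorentz_closed_span :: "(real \<Rightarrow> real) \<Rightarrow> (nat \<Rightarrow> real \<Rightarrow> real) \<Rightarrow> (real \<Rightarrow> real) set" where
  "lorentz_closed_span \<phi> xs =
     {z \<in> lorentz_space \<phi>. \<forall>e>0. \<exists>n c. lorentz_norm \<phi> (\<lambda>t. z t - (\<Sum>i<n. c i * xs i t)) < ennreal e}"

definition inclusion_DSS :: "(real \<Rightarrow> real) \<Rightarrow> (real \<Rightarrow> real) set \<Rightarrow> ((real \<Rightarrow> real) \<Rightarrow> real) \<Rightarrow> bool" where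
  "inclusion_DSS \<phi> E N \<longleftrightarrow>
     (\<exists>C. \<forall>x\<in>lorentz_space \<phi>. ennreal (N x) \<le> ennreal C * lorentz_norm \<phi> x) \<and>
     \<not> (\<exists>xs. (\<forall>n. xs n \<in> lorentz_space \<phi>) \<and>
            (\<forall>n. \<not> (AE t in lebesgue_on {0..1}. xs n t = 0)) \<and>
            (\<forall>m n. m \<noteq> n \<longrightarrow> (AE t in lebesgue_on {0..1}. xs m t * xs n t = 0)) \<and>
            (\<exists>c>0. \<forall>z\<in>lorentz_closed_span \<phi> xs. ennreal c * lorentz_norm \<phi> z \<le> ennreal (N z)))"

end

theory Submission
  imports Defs
begin


definition mu :: "(real \<Rightarrow> real) \<Rightarrow> real \<Rightarrow> real" where
  "mu x \<tau> = measure lebesgue {t\<in>{0..1}. \<tau> < \<bar>x t\<bar>}"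

definition p0 :: "(real \<Rightarrow> real) \<Rightarrow> real \<Rightarrow> real" where
  "p0 f a = (if a \<le> 0 then 0 else f a)"

lemma sets_lebesgue_on01:
  "(A::real set) \<in> sets (lebesgue_on {0..1}) \<Longrightarrow> A \<in> sets lebesgue"
  by (subst (asm) sets_restrict_space_iff) auto

lemma meas01_set_less:
  assumes "meas01 x"
  shows "{t\<in>{0..1}. \<tau> < \<bar>x t\<bar>} \<in> sets lebesgue"
proof -
  have [measurable]: "x \<in> borel_measurable (lebesgue_on {0..1})" using assms by (simp add: meas01_def)
  have "{t\<in>space (lebesgue_on {0..1}). \<tau> < \<bar>x t\<bar>} \<in> sets (lebesgue_on {0..1})"
    by measurable
  then show ?thesis by (auto intro: sets_lebesgue_on01)
qed

lemma meas01_set_less_enn: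
  assumes "meas01 x"
  shows "{t\<in>{0..1}. \<tau> < ennreal \<bar>x t\<bar>} \<in> sets lebesgue"
proof -
  have [measurable]: "x \<in> borel_measurable (lebesgue_on {0..1})" using assms by (simp add: meas01_def)
  have "{t\<in>space (lebesgue_on {0..1}). \<tau> < ennreal \<bar>x t\<bar>} \<in> sets (lebesgue_on {0..1})"
    by measurable
  then show ?thesis by (auto intro: sets_lebesgue_on01)
qed

lemma meas01_set_neq:
  assumes "meas01 x"
  shows "{t\<in>{0..1}. x t \<noteq> 0} \<in> sets lebesgue"
proof -
  have [measurable]: "x \<in> borel_measurable (lebesgue_on {0..1})" using assms by (simp add: meas01_def)
  have "{t\<in>space (lebesgue_on {0..1}). x t \<noteq> 0} \<in> sets (lebesgue_on {0..1})"
    by measurable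
  then show ?thesis by (auto intro: sets_lebesgue_on01)
qed

lemma emeasure_sub01_finite:
  "(A::real set) \<subseteq> {0..1} \<Longrightarrow> emeasure lebesgue A \<noteq> top"
proof -
  assume "A \<subseteq> {0..1}"
  then have "emeasure lebesgue A \<le> emeasure lebesgue {0..1::real}"
    by (rule emeasure_mono) auto
  then show ?thesis by (auto simp: top_unique)
qed

lemma fmeas01: "(A::real set) \<subseteq> {0..1} \<Longrightarrow> A \<in> sets lebesgue \<Longrightarrow> A \<in> fmeasurable lebesgue"
  by (rule fmeasurableI) (use emeasure_sub01_finite[of A] in \<open>auto simp only: less_top infinity_ennreal_def\<close>)

lemma measure_sub01_le1:
  assumes "(A::real set) \<subseteq> {0..1}" "A \<in> sets lebesgue"
  shows "measure lebesgue A \<le> 1"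
proof -
  have "measure lebesgue A \<le> measure lebesgue {0..1::real}"
    using assms by (intro measure_mono_fmeasurable) (auto intro: fmeas01)
  then show ?thesis by simp
qed

lemma emeasure_eq_mu:
  assumes "meas01 x"
  shows "emeasure lebesgue {t\<in>{0..1}. \<tau> < \<bar>x t\<bar>} = ennreal (mu x \<tau>)"
  unfolding mu_def
  by (rule emeasure_eq_ennreal_measure[OF emeasure_sub01_finite]) auto

lemma mu_nonneg: "0 \<le> mu x \<tau>"
  by (simp add: mu_def)

lemma mu_le1: "meas01 x \<Longrightarrow> mu x \<tau> \<le> 1"
  unfolding mu_def by (rule measure_sub01_le1[OF _ meas01_set_less]) auto

lemma mu_antimono:
  assumes "meas01 x" "\<sigma> \<le> \<tau>"
  shows "mu x \<tau> \<le> mu x \<sigma>"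
  unfolding mu_def
  using assms meas01_set_less[OF assms(1)]
  by (intro measure_mono_fmeasurable) (auto intro!: fmeas01)

lemma classG_pos: "classG \<phi> \<Longrightarrow> t \<in> {0<..1} \<Longrightarrow> \<phi> t > 0"
  by (simp add: classG_def)

lemma classG_mono: "classG \<phi> \<Longrightarrow> 0 < s \<Longrightarrow> s \<le> t \<Longrightarrow> t \<le> 1 \<Longrightarrow> \<phi> s \<le> \<phi> t"
  unfolding classG_def mono_on_def by auto

lemma p0_nonneg: "classG \<phi> \<Longrightarrow> a \<le> 1 \<Longrightarrow> 0 \<le> p0 \<phi> a"
  unfolding p0_def using classG_pos[of \<phi> a] by auto

lemma p0_mono: "classG \<phi> \<Longrightarrow> a \<le> b \<Longrightarrow> b \<le> 1 \<Longrightarrow> p0 \<phi> a \<le> p0 \<phi> b"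
  unfolding p0_def using classG_pos[of \<phi> b] classG_mono[of \<phi> a b] by auto

lemma p0_le1: "classG \<phi> \<Longrightarrow> a \<le> 1 \<Longrightarrow> p0 \<phi> a \<le> \<phi> 1"
  using p0_mono[of \<phi> a 1] by (simp add: p0_def)

lemma classG_cont:
  assumes "classG \<phi>"
  shows "continuous_on {0<..<1} \<phi>"
proof -
  have "convex_on {0<..1} (\<lambda>x. - \<phi> x)"
    using assms unfolding classG_def by (simp add: concave_on_def)
  then have "convex_on {0<..<1} (\<lambda>x. - \<phi> x)" by (rule convex_on_subset) auto
  then have "continuous_on {0<..<1} (\<lambda>x. - \<phi> x)" by (intro convex_on_continuous) auto
  then have "continuous_on {0<..<1} (\<lambda>x. - (- \<phi> x))" by (rule continuous_on_minus)
  then show ?thesis by simp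
qed

lemma classG_Inf:
  assumes "classG \<phi>"
  shows "0 \<le> Inf (\<phi> ` {0<..1})" "t \<in> {0<..1} \<Longrightarrow> Inf (\<phi> ` {0<..1}) \<le> \<phi> t"
proof -
  have bdd: "bdd_below (\<phi> ` {0<..1})"
    using classG_pos[OF assms] by (auto intro!: bdd_belowI[of _ 0] less_imp_le)
  show "0 \<le> Inf (\<phi> ` {0<..1})"
    using classG_pos[OF assms] by (intro cINF_greatest) (auto intro: less_imp_le)
  show "t \<in> {0<..1} \<Longrightarrow> Inf (\<phi> ` {0<..1}) \<le> \<phi> t"
    using bdd by (intro cINF_lower) auto
qed

lemma phi_ext_mono:
  assumes "classG \<phi>" "a \<le> b"
  shows "phi_ext \<phi> a \<le> phi_ext \<phi> b"
  using assms classG_Inf[OF assms(1)] classG_mono[OF assms(1)] classG_pos[OF assms(1), of b]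
    classG_pos[OF assms(1), of 1]
  unfolding phi_ext_def
  by auto


lemma phi_ext_rcont:
  assumes G: "classG \<phi>"
  shows "continuous (at_right a) (phi_ext \<phi>)"
proof -
  consider "a < 0" | "a = 0" | "0 < a" "a < 1" | "1 \<le> a" by linarith
  then show ?thesis
  proof cases
    case 1
    have "\<forall>\<^sub>F x in at_right a. phi_ext \<phi> x = phi_ext \<phi> a"
      unfolding eventually_at_right[of a 0, OF 1] using 1 by (auto simp: phi_ext_def)
    then show ?thesis unfolding continuous_within by (rule tendsto_eventually)
  next
    case 4
    have "\<forall>\<^sub>F x in at_right a. phi_ext \<phi> x = phi_ext \<phi> a"
      using eventually_at_right_less[of a] by eventually_elim (use 4 in \<open>auto simp: phi_ext_def\<close>)
    then show ?thesis unfolding continuous_within by (rule tendsto_eventually)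
  next
    case 3
    have "isCont \<phi> a"
      using classG_cont[OF G] 3 continuous_on_eq_continuous_at[of "{0<..<1}" \<phi>] by auto
    moreover have "\<forall>\<^sub>F x in nhds a. phi_ext \<phi> x = \<phi> x"
      using eventually_nhds_in_open[of "{0<..<1}" a] 3
      by (auto elim!: eventually_mono simp: phi_ext_def)
    ultimately have "isCont (phi_ext \<phi>) a" using isCont_cong by blast
    then show ?thesis by (rule continuous_at_imp_continuous_within)
  next
    case 2
    let ?I = "Inf (\<phi> ` {0<..1})"
    have "(phi_ext \<phi> \<longlongrightarrow> ?I) (at_right 0)"
    proof (rule order_tendstoI)
      fix y assume "y < ?I"
      show "\<forall>\<^sub>F x in at_right 0. y < phi_ext \<phi> x"
        unfolding eventually_at_right[of 0 1, OF zero_less_one]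
      proof (intro exI[of _ 1] conjI allI impI)
        fix x :: real assume x: "0 < x" "x < 1"
        then have "phi_ext \<phi> x = \<phi> x" by (simp add: phi_ext_def)
        moreover have "?I \<le> \<phi> x" using classG_Inf(2)[OF G, of x] x by simp
        ultimately show "y < phi_ext \<phi> x" using \<open>y < ?I\<close> by linarith
      qed simp
    next
      fix y assume "?I < y"
      then obtain t where t: "t \<in> {0<..1}" "\<phi> t < y"
        using cInf_lessD[of "\<phi> ` {0<..1}" y] by auto
      show "\<forall>\<^sub>F x in at_right 0. phi_ext \<phi> x < y"
        using t unfolding eventually_at_right[of 0 t, OF t(1)[simplified, THEN conjunct1]] 
      proof (intro exI[of _ t] conjI allI impI)
        fix x :: real assume x: "0 < x" "x < t"
        then have "phi_ext \<phi> x = \<phi> x" using t by (simp add: phi_ext_def)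
        moreover have "\<phi> x \<le> \<phi> t" using classG_mono[OF G, of x t] x t by simp
        ultimately show "phi_ext \<phi> x < y" using t by linarith
      qed (use t in simp)
    qed
    then show ?thesis using 2 unfolding continuous_within by (simp add: phi_ext_def)
  qed
qed

lemma emeasure_phi_Icc:
  assumes G: "classG \<phi>" and a: "0 < a" "a \<le> 1"
  shows "ennreal (\<phi> a) \<le> emeasure (interval_measure (phi_ext \<phi>)) {0..a}"
proof -
  let ?M = "interval_measure (phi_ext \<phi>)"
  have Ioc: "emeasure ?M {u<..v} = phi_ext \<phi> v - phi_ext \<phi> u" if "u \<le> v" for u v
    using that by (intro emeasure_interval_measure_Ioc phi_ext_mono[OF G] phi_ext_rcont[OF G])
  have null: "emeasure ?M {-1<..<0} = 0"
  proof -
    have eq: "{-1<..<0::real} = (\<Union>n. {-1<..-1/(Suc n)})"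
    proof safe
      fix x :: real assume x: "x \<in> {-1<..<0}"
      then have "0 < - x" by simp
      then obtain n where n: "inverse (real (Suc n)) < - x" using reals_Archimedean by blast
      have "x \<le> -1/(Suc n)" using n by (simp add: divide_inverse)
      then show "x \<in> (\<Union>n. {-1<..-1/(Suc n)})" using x by auto
    next
      fix x :: real and n assume x: "x \<in> {-1<..-1/(Suc n)}"
      have "-1/(Suc n) < (0::real)" by simp
      moreover have "x \<le> -1/(Suc n)" "-1 < x" using x by auto
      ultimately have "x < 0" "-1 < x" by linarith+
      then show "x \<in> {-1<..<0}" by simp
    qed
    have "emeasure ?M (\<Union>n. {-1<..-1/(Suc n)}) = 0"
    proof (rule emeasure_UN_eq_0)
      fix n
      show "emeasure ?M {-1<..-1/(Suc n)} = 0"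
        by (subst Ioc) (auto simp: phi_ext_def)
    qed auto
    then show ?thesis using eq by simp
  qed
  have "emeasure ?M {-1<..a} = phi_ext \<phi> a - phi_ext \<phi> (-1)"
    using a by (intro Ioc) auto
  also have "\<dots> = \<phi> a" using a by (simp add: phi_ext_def)
  finally have 1: "emeasure ?M {-1<..a} = \<phi> a" .
  have "emeasure ?M {-1<..a} \<le> emeasure ?M ({0..a} \<union> {-1<..<0})"
    by (rule emeasure_mono) auto
  also have "\<dots> \<le> emeasure ?M {0..a} + emeasure ?M {-1<..<0}"
    by (rule emeasure_subadditive) auto
  finally show ?thesis using 1 null by simp
qed


lemma distr_ge_mu:
  assumes x: "meas01 x" and \<tau>: "0 \<le> \<tau>" and \<sigma>: "\<sigma> < ennreal \<tau>"
  shows "ennreal (mu x \<tau>) \<le> distr01 x \<sigma>"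
proof -
  have "{t\<in>{0..1}. \<tau> < \<bar>x t\<bar>} \<subseteq> {t\<in>{0..1}. \<sigma> < ennreal \<bar>x t\<bar>}"
  proof safe
    fix t assume "\<tau> < \<bar>x t\<bar>"
    then have "ennreal \<tau> < ennreal \<bar>x t\<bar>" using \<tau> by (simp add: ennreal_less_iff)
    then show "\<sigma> < ennreal \<bar>x t\<bar>" using \<sigma> by (rule order.strict_trans[rotated])
  qed
  then have "emeasure lebesgue {t\<in>{0..1}. \<tau> < \<bar>x t\<bar>} \<le> emeasure lebesgue {t\<in>{0..1}. \<sigma> < ennreal \<bar>x t\<bar>}"
    by (rule emeasure_mono) (rule meas01_set_less_enn[OF x])
  then show ?thesis unfolding distr01_def using emeasure_eq_mu[OF x] by simp
qed

lemma rearr_ge: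
  assumes x: "meas01 x" and \<tau>: "0 \<le> \<tau>" and pos: "0 < mu x \<tau>" and s: "0 \<le> s" "s \<le> mu x \<tau>"
  shows "ennreal \<tau> \<le> rearr x s"
proof (cases "s \<le> 0")
  case True
  then have "rearr x s = Inf {\<sigma>. distr01 x \<sigma> = 0}" by (simp add: rearr_def)
  also have "ennreal \<tau> \<le> \<dots>"
  proof (rule Inf_greatest, rule ccontr)
    fix \<sigma> assume "\<sigma> \<in> {\<sigma>. distr01 x \<sigma> = 0}" "\<not> ennreal \<tau> \<le> \<sigma>"
    then have "\<sigma> < ennreal \<tau>" "distr01 x \<sigma> = 0" by auto
    then have "ennreal (mu x \<tau>) \<le> 0" using distr_ge_mu[OF x \<tau>] by metis
    then show False using pos by simp
  qed
  finally show ?thesis .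
next
  case False
  then have "rearr x s = Inf {\<sigma>. distr01 x \<sigma> < ennreal s}" by (simp add: rearr_def)
  also have "ennreal \<tau> \<le> \<dots>"
  proof (rule Inf_greatest, rule ccontr)
    fix \<sigma> assume "\<sigma> \<in> {\<sigma>. distr01 x \<sigma> < ennreal s}" "\<not> ennreal \<tau> \<le> \<sigma>"
    then have "\<sigma> < ennreal \<tau>" "distr01 x \<sigma> < ennreal s" by auto
    then have "ennreal (mu x \<tau>) < ennreal s" using distr_ge_mu[OF x \<tau>] by (metis le_less_trans)
    then show False using s by (simp add: ennreal_less_iff)
  qed
  finally show ?thesis .
qed

lemma lorentz_lower:
  assumes G: "classG \<phi>" and x: "meas01 x" and h: "0 < h"
  shows "ennreal (\<Sum>k\<in>{1..K}. h * p0 \<phi> (mu x (real k * h))) \<le> lorentz_norm \<phi> x"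
proof -
  let ?M = "interval_measure (phi_ext \<phi>)"
  define a where "a k = mu x (real k * h)" for k :: nat
  define B where "B k = (if 0 < a k then {0..a k} else {})" for k
  have a01: "0 \<le> a k" "a k \<le> 1" for k using mu_nonneg mu_le1[OF x] by (auto simp: a_def)
  have Bsub: "B k \<subseteq> {0..1}" for k using a01[of k] by (auto simp: B_def)
  have Bsets: "B k \<in> sets borel" for k by (auto simp: B_def)
  have pt: "(\<Sum>k\<in>{1..K}. ennreal h * indicator (B k) s) \<le> rearr x s * indicator {0..1} s" for s
  proof -
    define S where "S = {k\<in>{1..K}. s \<in> B k}"
    have "(\<Sum>k\<in>{1..K}. ennreal h * indicator (B k) s) = (\<Sum>k\<in>{1..K}. if s \<in> B k then ennreal h else 0)"
      by (intro sum.cong) (auto simp: indicator_def)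
    also have "\<dots> = (\<Sum>k\<in>S. ennreal h)" unfolding S_def by (rule sum.inter_filter[symmetric]) simp
    also have "\<dots> = ennreal (real (card S) * h)" using h by (simp add: ennreal_mult ennreal_of_nat_eq_real_of_nat)
    finally have eq: "(\<Sum>k\<in>{1..K}. ennreal h * indicator (B k) s) = ennreal (real (card S) * h)" .
    show ?thesis
    proof (cases "S = {}")
      case True
      then have "ennreal (real (card S) * h) = 0" by simp
      then show ?thesis unfolding eq by simp
    next
      case False
      have finS: "finite S" by (simp add: S_def)
      define J where "J = Max S"
      have JS: "J \<in> S" using Max_in[OF finS False] by (simp add: J_def)
      have "S \<subseteq> {1..J}" using Max_ge[OF finS] by (auto simp: J_def S_def)
      then have cS: "card S \<le> J" using card_mono[of "{1..J}" S] by simp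
      have sB: "s \<in> B J" and J1: "1 \<le> J" using JS by (auto simp: S_def)
      then have apos: "0 < a J" and s: "0 \<le> s" "s \<le> a J" by (auto simp: B_def split: if_splits)
      have s01: "s \<in> {0..1}" using sB Bsub[of J] by blast
      have "ennreal (real (card S) * h) \<le> ennreal (real J * h)"
        using cS h by (intro ennreal_leI mult_right_mono) auto
      also have "\<dots> \<le> rearr x s"
        using rearr_ge[OF x _ _ s[unfolded a_def]] apos h by (auto simp: a_def)
      finally show ?thesis using eq s01 by simp
    qed
  qed
  have "ennreal (\<Sum>k\<in>{1..K}. h * p0 \<phi> (a k)) = (\<Sum>k\<in>{1..K}. ennreal (h * p0 \<phi> (a k)))"
    using h p0_nonneg[OF G a01(2)] by (intro sum_ennreal[symmetric]) auto
  also have "\<dots> \<le> (\<Sum>k\<in>{1..K}. ennreal h * emeasure ?M (B k))"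
  proof (rule sum_mono)
    fix k
    show "ennreal (h * p0 \<phi> (a k)) \<le> ennreal h * emeasure ?M (B k)"
    proof (cases "0 < a k")
      case True
      then have "ennreal (h * p0 \<phi> (a k)) = ennreal h * ennreal (\<phi> (a k))"
        using h by (simp add: p0_def ennreal_mult')
      also have "\<dots> \<le> ennreal h * emeasure ?M (B k)"
        using emeasure_phi_Icc[OF G True a01(2)] True by (intro mult_left_mono) (auto simp: B_def)
      finally show ?thesis .
    next
      case False then show ?thesis by (simp add: p0_def)
    qed
  qed
  also have "\<dots> = (\<Sum>k\<in>{1..K}. \<integral>\<^sup>+ s. ennreal h * indicator (B k) s \<partial>?M)"
    using Bsets by (intro sum.cong refl nn_integral_cmult_indicator[symmetric]) auto
  also have "\<dots> = \<integral>\<^sup>+ s. (\<Sum>k\<in>{1..K}. ennreal h * indicator (B k) s) \<partial>?M"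
    using Bsets by (intro nn_integral_sum[symmetric]) auto
  also have "\<dots> \<le> \<integral>\<^sup>+ s. rearr x s * indicator {0..1} s \<partial>?M"
    by (intro nn_integral_mono pt)
  finally show ?thesis by (simp add: lorentz_norm_def a_def)
qed


locale sF =
  fixes F :: "(real \<Rightarrow> real) set" and N :: "(real \<Rightarrow> real) \<Rightarrow> real" and \<psi> :: "real \<Rightarrow> real"
  assumes S: "symmetric_space F N" and FF: "has_fundamental_function F N \<psi>" and G: "classG \<psi>"
begin

lemma P1: "\<forall>x\<in>F. meas01 x" using S unfolding symmetric_space_def by (elim conjE) assumption
lemma zero: "(\<lambda>t. 0) \<in> F" using S unfolding symmetric_space_def by (elim conjE) assumption
lemma P3: "\<forall>x\<in>F. \<forall>y\<in>F. (\<lambda>t. x t + y t) \<in> F" using S unfolding symmetric_space_def by (elim conjE) assumption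
lemma P4: "\<forall>x\<in>F. \<forall>c. (\<lambda>t. c * x t) \<in> F" using S unfolding symmetric_space_def by (elim conjE) assumption
lemma P5: "\<forall>x\<in>F. \<forall>y\<in>F. N (\<lambda>t. x t + y t) \<le> N x + N y" using S unfolding symmetric_space_def by (elim conjE) assumption
lemma P6: "\<forall>x\<in>F. \<forall>c. N (\<lambda>t. c * x t) = \<bar>c\<bar> * N x" using S unfolding symmetric_space_def by (elim conjE) assumption
lemma P7: "\<forall>x\<in>F. N x \<ge> 0" using S unfolding symmetric_space_def by (elim conjE) assumption
lemma P8: "\<forall>x\<in>F. N x = 0 \<longleftrightarrow> (AE t in lebesgue_on {0..1}. x t = 0)" using S unfolding symmetric_space_def by (elim conjE) assumption
lemma meas: "x \<in> F \<Longrightarrow> meas01 x" using P1 by blast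
lemma add: "x \<in> F \<Longrightarrow> y \<in> F \<Longrightarrow> (\<lambda>t. x t + y t) \<in> F" using P3 by blast
lemma scal: "x \<in> F \<Longrightarrow> (\<lambda>t. c * x t) \<in> F" using P4 by blast
lemma tri: "x \<in> F \<Longrightarrow> y \<in> F \<Longrightarrow> N (\<lambda>t. x t + y t) \<le> N x + N y" using P5 by blast
lemma hom: "x \<in> F \<Longrightarrow> N (\<lambda>t. c * x t) = \<bar>c\<bar> * N x" using P6 by blast
lemma nonneg: "x \<in> F \<Longrightarrow> 0 \<le> N x" using P7 by blast
lemma null: "x \<in> F \<Longrightarrow> N x = 0 \<longleftrightarrow> (AE t in lebesgue_on {0..1}. x t = 0)" using P8 by blast
lemma completeA: "\<forall>xs. (\<forall>n. xs n \<in> F) \<and>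
           (\<forall>e>0. \<exists>M. \<forall>m\<ge>M. \<forall>n\<ge>M. N (\<lambda>t. xs m t - xs n t) < e)
           \<longrightarrow> (\<exists>x\<in>F. (\<lambda>n. N (\<lambda>t. xs n t - x t)) \<longlonglongrightarrow> 0)"
  using S unfolding symmetric_space_def by (elim conjE) assumption
lemma idealA: "\<forall>x y. y \<in> F \<and> meas01 x \<and> (\<forall>t\<in>{0..1}. \<bar>x t\<bar> \<le> \<bar>y t\<bar>) \<longrightarrow> x \<in> F \<and> N x \<le> N y"
  using S unfolding symmetric_space_def by (elim conjE) assumption
lemma equiA: "\<forall>x y. y \<in> F \<and> meas01 x \<and> equimeasurable x y \<longrightarrow> x \<in> F \<and> N x = N y"
  using S unfolding symmetric_space_def by (elim conjE) assumption
lemma complete: "(\<And>n. xs n \<in> F) \<Longrightarrow> (\<And>e. e > 0 \<Longrightarrow> \<exists>M. \<forall>m\<ge>M. \<forall>n\<ge>M. N (\<lambda>t. xs m t - xs n t) < e)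
   \<Longrightarrow> \<exists>x\<in>F. (\<lambda>n. N (\<lambda>t. xs n t - x t)) \<longlonglongrightarrow> 0"
  using completeA by blast
lemma ideal: "y \<in> F \<Longrightarrow> meas01 x \<Longrightarrow> (\<And>t. t \<in> {0..1} \<Longrightarrow> \<bar>x t\<bar> \<le> \<bar>y t\<bar>) \<Longrightarrow> x \<in> F \<and> N x \<le> N y"
  using idealA by blast
lemma equi: "y \<in> F \<Longrightarrow> meas01 x \<Longrightarrow> equimeasurable x y \<Longrightarrow> x \<in> F \<and> N x = N y"
  using equiA by blast

lemma N_zero: "N (\<lambda>t. 0) = 0"
  using null[OF zero] by simp

lemma N_minus: "x \<in> F \<Longrightarrow> y \<in> F \<Longrightarrow> N (\<lambda>t. x t - y t) = N (\<lambda>t. y t - x t)"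
proof -
  assume x: "x \<in> F" and y: "y \<in> F"
  have d: "(\<lambda>t. y t - x t) \<in> F" using add[OF y scal[OF x, of "-1"]] by simp
  have "N (\<lambda>t. (-1) * (y t - x t)) = N (\<lambda>t. y t - x t)" using hom[OF d, of "-1"] by simp
  then show ?thesis by simp
qed

end

lemma meas01_cind:
  assumes "E \<in> sets lebesgue"
  shows "meas01 (\<lambda>t. c * indicator E t)"
proof -
  have "(\<lambda>t. c * indicator E t) \<in> borel_measurable lebesgue"
    using assms by measurable
  then show ?thesis unfolding meas01_def by (rule measurable_restrict_space1)
qed

context sF begin

lemma ind_in:
  assumes E: "E \<subseteq> {0..1}" "E \<in> sets lebesgue"
  shows "(\<lambda>t. c * indicator E t) \<in> F \<and> N (\<lambda>t. c * indicator E t) = \<bar>c\<bar> * p0 \<psi> (measure lebesgue E)"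
proof -
  define a where "a = measure lebesgue E"
  have a01: "0 \<le> a" "a \<le> 1" using measure_sub01_le1[OF E] by (auto simp: a_def)
  have eE: "emeasure lebesgue E = ennreal a"
    unfolding a_def by (rule emeasure_eq_ennreal_measure[OF emeasure_sub01_finite[OF E(1)]])
  have eI: "emeasure lebesgue {0<..<a} = ennreal a" using a01 by simp
  let ?g = "\<lambda>t. c * indicator {0<..<a} t"
  have gF: "?g \<in> F \<and> N ?g = \<bar>c\<bar> * p0 \<psi> a"
  proof (cases "a = 0")
    case True
    then have "?g = (\<lambda>t. 0)" by (auto simp: fun_eq_iff)
    then show ?thesis using zero N_zero True by (simp add: p0_def)
  next
    case False
    then have "a \<in> {0<..1}" using a01 by auto
    then have "indicator {0<..<a} \<in> F" "N (indicator {0<..<a}) = \<psi> a"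
      using FF unfolding has_fundamental_function_def by auto
    then show ?thesis using scal hom False a01 by (simp add: p0_def)
  qed
  have eq: "equimeasurable (\<lambda>t. c * indicator E t) ?g"
    unfolding equimeasurable_def
  proof (intro allI impI)
    fix \<tau> :: real assume "0 < \<tau>"
    have 1: "{t\<in>{0..1}. \<tau> < \<bar>c * indicator E t\<bar>} = (if \<tau> < \<bar>c\<bar> then E else {})"
      using E(1) \<open>0 < \<tau>\<close> by (auto simp: indicator_def)
    have 2: "{t\<in>{0..1}. \<tau> < \<bar>?g t\<bar>} = (if \<tau> < \<bar>c\<bar> then {0<..<a} else {})"
      using a01 \<open>0 < \<tau>\<close> by (auto simp: indicator_def)
    show "emeasure lebesgue {t\<in>{0..1}. \<tau> < \<bar>c * indicator E t\<bar>} = emeasure lebesgue {t\<in>{0..1}. \<tau> < \<bar>?g t\<bar>}"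
      unfolding 1 2 using eE eI by simp
  qed
  show ?thesis using equi[OF conjunct1[OF gF] meas01_cind[OF E(2)] eq] gF by (simp add: a_def)
qed

lemma level_lower:
  assumes w: "w \<in> F" and \<eta>: "0 < \<eta>"
  shows "\<eta> * p0 \<psi> (mu w \<eta>) \<le> N w"
proof -
  define E where "E = {t\<in>{0..1}. \<eta> < \<bar>w t\<bar>}"
  have E: "E \<subseteq> {0..1}" "E \<in> sets lebesgue" using meas01_set_less[OF meas[OF w]] by (auto simp: E_def)
  note g = ind_in[OF E, of \<eta>]
  have "N (\<lambda>t. \<eta> * indicator E t) \<le> N w"
    using ideal[OF w meas01_cind[OF E(2)]] \<eta> by (auto simp: E_def indicator_def)
  then show ?thesis using g \<eta> by (simp add: mu_def E_def)
qed

lemma sum_in: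
  assumes "finite I" "\<And>i. i \<in> I \<Longrightarrow> f i \<in> F"
  shows "(\<lambda>t. \<Sum>i\<in>I. f i t) \<in> F \<and> N (\<lambda>t. \<Sum>i\<in>I. f i t) \<le> (\<Sum>i\<in>I. N (f i))"
  using assms
proof (induction I rule: finite_induct)
  case empty
  then show ?case using zero N_zero by simp
next
  case (insert a I)
  then have fa: "f a \<in> F" and IH: "(\<lambda>t. \<Sum>i\<in>I. f i t) \<in> F" "N (\<lambda>t. \<Sum>i\<in>I. f i t) \<le> (\<Sum>i\<in>I. N (f i))"
    by auto
  have "(\<lambda>t. f a t + (\<Sum>i\<in>I. f i t)) \<in> F" using add[OF fa IH(1)] .
  moreover have "N (\<lambda>t. f a t + (\<Sum>i\<in>I. f i t)) \<le> N (f a) + (\<Sum>i\<in>I. N (f i))"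
    using tri[OF fa IH(1)] IH(2) by linarith
  ultimately show ?case using insert by simp
qed

lemma bounded_in:
  assumes y: "meas01 y" and h: "0 < h" and bd: "\<And>t. t \<in> {0..1} \<Longrightarrow> \<bar>y t\<bar> \<le> real K * h"
  shows "y \<in> F \<and> N y \<le> (\<Sum>k<K. h * p0 \<psi> (mu y (real k * h)))"
proof -
  define E where "E k = {t\<in>{0..1}. real k * h < \<bar>y t\<bar>}" for k :: nat
  have E: "E k \<subseteq> {0..1}" "E k \<in> sets lebesgue" for k
    using meas01_set_less[OF y] by (auto simp: E_def)
  define s where "s = (\<lambda>t. \<Sum>k<K. h * indicator (E k) t)"
  have sF: "s \<in> F \<and> N s \<le> (\<Sum>k<K. N (\<lambda>t. h * indicator (E k) t))"
    unfolding s_def using ind_in[OF E] by (intro sum_in) auto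
  have Nk: "N (\<lambda>t. h * indicator (E k) t) = h * p0 \<psi> (mu y (real k * h))" for k
    using ind_in[OF E(1)[of k] E(2)[of k], of h] h by (simp add: mu_def E_def)
  have le: "\<bar>y t\<bar> \<le> \<bar>s t\<bar>" if t: "t \<in> {0..1}" for t
  proof -
    define j where "j = nat \<lceil>\<bar>y t\<bar> / h\<rceil>"
    have jge: "\<bar>y t\<bar> / h \<le> real j" unfolding j_def by linarith
    have "\<bar>y t\<bar> / h \<le> real K" using bd[OF t] h by (simp add: field_simps)
    then have jK: "j \<le> K" unfolding j_def by (simp add: nat_le_iff ceiling_le_iff)
    have inE: "t \<in> E k" if "k < j" for k
    proof -
      have "real k < \<bar>y t\<bar> / h" using that unfolding j_def by linarith
      then have "real k * h < \<bar>y t\<bar>" using h by (simp add: field_simps)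
      then show ?thesis using t by (simp add: E_def)
    qed
    have "\<bar>y t\<bar> \<le> real j * h" using jge h by (simp add: field_simps)
    also have "\<dots> = (\<Sum>k<j. h * indicator (E k) t)" using inE by simp
    also have "\<dots> \<le> s t" unfolding s_def
      using jK h by (intro sum_mono2) auto
    finally show ?thesis by simp
  qed
  have "y \<in> F \<and> N y \<le> N s" using ideal[OF conjunct1[OF sF] y le] by auto
  then show ?thesis using sF Nk by simp
qed

end


lemma meas01_fun:
  assumes "meas01 x" "g \<in> borel_measurable borel"
  shows "meas01 (\<lambda>t. g (x t))"
  using assms unfolding meas01_def by measurable

lemma meas01_diff:
  assumes "meas01 x" "meas01 y"
  shows "meas01 (\<lambda>t. x t - y t)"
  using assms unfolding meas01_def by measurable

lemma meas01_minabs: "meas01 x \<Longrightarrow> meas01 (\<lambda>t. min \<bar>x t\<bar> c)"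
  by (rule meas01_fun[of x "\<lambda>u. min \<bar>u\<bar> c"]) auto

lemma meas01_abs: "meas01 x \<Longrightarrow> meas01 (\<lambda>t. \<bar>x t\<bar>)"
  by (rule meas01_fun[of x "\<lambda>u. \<bar>u\<bar>"]) auto

lemma mu_to0:
  assumes x: "meas01 x"
  shows "(\<lambda>n. mu x (real n)) \<longlonglongrightarrow> 0"
proof -
  define A where "A n = {t\<in>{0..1}. real n < \<bar>x t\<bar>}" for n :: nat
  have "(\<lambda>n. measure lebesgue (A n)) \<longlonglongrightarrow> measure lebesgue (\<Inter> (range A))"
  proof (rule Lim_measure_decseq)
    show "range A \<subseteq> sets lebesgue" using meas01_set_less[OF x] by (auto simp: A_def)
    show "antimono_on UNIV A" unfolding monotone_on_def A_def by auto
    show "emeasure lebesgue (A i) \<noteq> \<infinity>" for i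
      using emeasure_sub01_finite[of "A i"] unfolding A_def infinity_ennreal_def by blast
  qed
  moreover have "\<Inter> (range A) = {}"
  proof safe
    fix t assume "t \<in> \<Inter> (range A)"
    moreover obtain n where "\<bar>x t\<bar> < real n" using reals_Archimedean2 by blast
    ultimately show "t \<in> {}" by (auto simp: A_def dest!: spec[of _ n])
  qed
  ultimately show ?thesis by (simp add: A_def mu_def)
qed

lemma p0_to0:
  assumes psi0: "(\<psi> \<longlongrightarrow> 0) (at_right 0)" and a: "a \<longlonglongrightarrow> 0"
  shows "(\<lambda>n. p0 \<psi> (a n)) \<longlonglongrightarrow> 0"
proof (rule tendstoI)
  fix e :: real assume e: "0 < e"
  have "\<forall>\<^sub>F y in at_right 0. dist (\<psi> y) 0 < e" using tendstoD[OF psi0 e] .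
  then obtain b where b: "0 < b" "\<And>y. 0 < y \<Longrightarrow> y < b \<Longrightarrow> dist (\<psi> y) 0 < e"
    unfolding eventually_at_right[OF zero_less_one] by auto
  have "\<forall>\<^sub>F n in sequentially. dist (a n) 0 < b" using tendstoD[OF a b(1)] .
  then show "\<forall>\<^sub>F n in sequentially. dist (p0 \<psi> (a n)) 0 < e"
  proof eventually_elim
    case (elim n)
    then have "a n < b" by (simp add: dist_real_def)
    then show ?case using b(2)[of "a n"] e by (auto simp: p0_def)
  qed
qed

lemma mu_from_p0:
  assumes G: "classG \<psi>" and lim: "(\<lambda>n. p0 \<psi> (b n)) \<longlonglongrightarrow> 0" and b: "\<And>n. 0 \<le> b n" "\<And>n. b n \<le> 1"
  shows "b \<longlonglongrightarrow> 0"
proof (rule order_tendstoI)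
  fix y :: real assume "y < 0"
  then show "\<forall>\<^sub>F n in sequentially. y < b n" using b(1) by (intro always_eventually) (metis less_le_trans)
next
  fix e :: real assume e: "0 < e"
  define a where "a = min e 1"
  have a: "0 < a" "a \<le> 1" "a \<le> e" using e by (auto simp: a_def)
  have pa: "0 < \<psi> a" using classG_pos[OF G] a by auto
  have "\<forall>\<^sub>F n in sequentially. p0 \<psi> (b n) < \<psi> a"
    using order_tendstoD(2)[OF lim pa] .
  then show "\<forall>\<^sub>F n in sequentially. b n < e"
  proof eventually_elim
    case (elim n)
    show ?case
    proof (rule ccontr)
      assume "\<not> b n < e"
      then have "a \<le> b n" using a by linarith
      then have "\<psi> a \<le> p0 \<psi> (b n)" using classG_mono[OF G a(1) _ b(2)] a by (simp add: p0_def)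
      then show False using elim by linarith
    qed
  qed
qed


locale emb = sF F N \<psi> for F N \<psi> +
  fixes \<phi> :: "real \<Rightarrow> real" and x :: "real \<Rightarrow> real" and D :: real
  assumes Gp: "classG \<phi>" and psi0: "(\<psi> \<longlongrightarrow> 0) (at_right 0)" and x: "meas01 x"
    and fin: "lorentz_norm \<phi> x < top" and D: "0 \<le> D"
    and Dle: "\<And>\<tau>. 0 < \<tau> \<Longrightarrow> p0 \<psi> (mu x \<tau>) \<le> D * p0 \<phi> (mu x \<tau>)"
begin

definition "S = enn2real (lorentz_norm \<phi> x)"
definition "y n = (\<lambda>t. min \<bar>x t\<bar> (real n))"

lemma LS: "lorentz_norm \<phi> x = ennreal S"
  using fin by (simp add: S_def ennreal_enn2real)

lemma S0: "0 \<le> S" by (simp add: S_def)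

lemma L1: "0 < h \<Longrightarrow> (\<Sum>k<K. h * p0 \<phi> (mu x (real (Suc k) * h))) \<le> S"
proof -
  assume h: "0 < h"
  have "ennreal (\<Sum>k\<in>{1..K}. h * p0 \<phi> (mu x (real k * h))) \<le> ennreal S"
    using lorentz_lower[OF Gp x h, of K] LS by simp
  then have "(\<Sum>k\<in>{1..K}. h * p0 \<phi> (mu x (real k * h))) \<le> S"
    using S0 by (simp add: ennreal_le_iff)
  then show ?thesis by (simp add: sum.atLeast1_atMost_eq)
qed

lemma ymeas: "meas01 (y n)"
  unfolding y_def by (rule meas01_minabs[OF x])

lemma ymu: "mu (y n) \<tau> \<le> mu x \<tau>"
  unfolding mu_def
  using meas01_set_less[OF x, of \<tau>] meas01_set_less[OF ymeas[of n], of \<tau>]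
  by (intro measure_mono_fmeasurable) (auto intro!: fmeas01 simp: y_def)

lemma psi_le1: "a \<le> 1 \<Longrightarrow> p0 \<psi> a \<le> \<psi> 1"
  using p0_le1[OF G] .

lemma Dle': "0 < \<tau> \<Longrightarrow> p0 \<psi> (mu x' \<tau>) \<le> D * p0 \<phi> (mu x \<tau>)" if "mu x' \<tau> \<le> mu x \<tau>" for x'
  using that p0_mono[OF G that mu_le1[OF x]] Dle by (meson order_trans)

lemma yF: "y n \<in> F \<and> N (y n) \<le> D * S"
proof -
  have ybd: "\<bar>y n t\<bar> \<le> real n" for t unfolding y_def by auto
  have yb: "y n \<in> F" using bounded_in[OF ymeas zero_less_one, where K=n] ybd by simp
  have "N (y n) \<le> D * S + e" if e: "0 < e" for e
  proof -
    have p1: "0 < \<psi> 1" using classG_pos[OF G] by simp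
    define h where "h = e / \<psi> 1"
    have h: "0 < h" "h * \<psi> 1 = e" using e p1 by (auto simp: h_def)
    define K where "K = nat \<lceil>real n / h\<rceil>"
    have "real n / h \<le> real K" unfolding K_def by linarith
    then have nK: "real n \<le> real K * h" using h by (simp add: field_simps)
    have "N (y n) \<le> (\<Sum>k<K. h * p0 \<psi> (mu (y n) (real k * h)))"
      using bounded_in[OF ymeas h(1), where K=K] ybd nK by (meson order_trans)
    also have "\<dots> \<le> (\<Sum>k<Suc K. h * p0 \<psi> (mu (y n) (real k * h)))"
      using h p0_nonneg[OF G mu_le1[OF ymeas]] by (intro sum_mono2) auto
    also have "\<dots> = h * p0 \<psi> (mu (y n) 0) + (\<Sum>k<K. h * p0 \<psi> (mu (y n) (real (Suc k) * h)))"
      by (subst sum.lessThan_Suc_shift) simp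
    also have "\<dots> \<le> h * \<psi> 1 + (\<Sum>k<K. h * (D * p0 \<phi> (mu x (real (Suc k) * h))))"
    proof (intro add_mono sum_mono mult_left_mono)
      show "p0 \<psi> (mu (y n) 0) \<le> \<psi> 1" using psi_le1 mu_le1[OF ymeas] by blast
      fix k assume "k \<in> {..<K}"
      show "p0 \<psi> (mu (y n) (real (Suc k) * h)) \<le> D * p0 \<phi> (mu x (real (Suc k) * h))"
        using Dle'[OF ymu] h by simp
    qed (use h in auto)
    also have "\<dots> = e + D * (\<Sum>k<K. h * p0 \<phi> (mu x (real (Suc k) * h)))"
      using h by (simp add: sum_distrib_left algebra_simps)
    also have "\<dots> \<le> e + D * S"
      using L1[OF h(1), of K] D by (intro add_left_mono mult_left_mono) auto
    finally show ?thesis by simp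
  qed
  then have "N (y n) \<le> D * S" by (rule field_le_epsilon)
  then show ?thesis using yb by simp
qed

end


context emb begin

definition "u j = p0 \<phi> (mu x (real j))"
definition "T n = (\<Sum>k. u (k + Suc n))"
definition "v n = p0 \<psi> (mu x (real n))"

lemma u0: "0 \<le> u j" unfolding u_def using p0_nonneg[OF Gp mu_le1[OF x]] .

lemma usum: "summable u"
proof (rule summableI_nonneg_bounded[OF u0])
  fix K
  have "(\<Sum>j<K. u j) \<le> (\<Sum>j<Suc K. u j)" using u0 by (intro sum_mono2) auto
  also have "\<dots> = u 0 + (\<Sum>j<K. u (Suc j))" by (subst sum.lessThan_Suc_shift) simp
  also have "\<dots> \<le> u 0 + S" using L1[OF zero_less_one, of K] by (simp add: u_def)
  finally show "(\<Sum>j<K. u j) \<le> u 0 + S" .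
qed

lemma T_to0: "T \<longlonglongrightarrow> 0"
proof -
  have "(\<lambda>n. \<Sum>k. u (k + n)) \<longlonglongrightarrow> 0" by (rule suminf_exist_split2[OF usum])
  then have "(\<lambda>n. \<Sum>k. u (k + Suc n)) \<longlonglongrightarrow> 0" by (rule LIMSEQ_Suc)
  then show ?thesis by (simp add: T_def[abs_def])
qed

lemma v_to0: "v \<longlonglongrightarrow> 0"
  unfolding v_def[abs_def] by (rule p0_to0[OF psi0 mu_to0[OF x]])

lemma T0: "0 \<le> T n"
  unfolding T_def by (intro suminf_nonneg summable_ignore_initial_segment[OF usum] u0)

lemma cb:
  assumes nm: "n \<le> m"
  shows "(\<lambda>t. y m t - y n t) \<in> F \<and> N (\<lambda>t. y m t - y n t) \<le> v n + D * T n"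
proof -
  define d where "d = (\<lambda>t. y m t - y n t)"
  have dmeas: "meas01 d" unfolding d_def by (rule meas01_diff[OF ymeas ymeas])
  have dbd: "\<bar>d t\<bar> \<le> real (m - n) * 1" for t
    using nm unfolding d_def y_def by (auto simp: min_def of_nat_diff)
  have B: "d \<in> F \<and> N d \<le> (\<Sum>k<m-n. 1 * p0 \<psi> (mu d (real k * 1)))"
    using bounded_in[OF dmeas zero_less_one, where K="m-n"] dbd by blast
  have dmu: "mu d (real k) \<le> mu x (real n + real k)" for k
  proof -
    have "{t\<in>{0..1}. real k < \<bar>d t\<bar>} \<subseteq> {t\<in>{0..1}. real n + real k < \<bar>x t\<bar>}"
      using nm unfolding d_def y_def by (auto simp: min_def split: if_splits)
    then show ?thesis unfolding mu_def
      using meas01_set_less[OF x, of "real n + real k"] meas01_set_less[OF dmeas, of "real k"]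
      by (intro measure_mono_fmeasurable) (auto intro!: fmeas01)
  qed
  have "(\<Sum>k<m-n. 1 * p0 \<psi> (mu d (real k * 1))) \<le> (\<Sum>k<Suc (m-n). p0 \<psi> (mu d (real k)))"
    using p0_nonneg[OF G mu_le1[OF dmeas]] by (simp only: mult_1 mult_1_right, intro sum_mono2) auto
  also have "\<dots> = p0 \<psi> (mu d 0) + (\<Sum>k<m-n. p0 \<psi> (mu d (real (Suc k))))"
    by (subst sum.lessThan_Suc_shift) simp
  also have "\<dots> \<le> v n + (\<Sum>k<m-n. D * u (k + Suc n))"
  proof (intro add_mono sum_mono)
    show "p0 \<psi> (mu d 0) \<le> v n"
      unfolding v_def using dmu[of 0] by (intro p0_mono[OF G _ mu_le1[OF x]]) simp
    fix k assume "k \<in> {..<m-n}"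
    have "p0 \<psi> (mu d (real (Suc k))) \<le> p0 \<psi> (mu x (real n + real (Suc k)))"
      using dmu[of "Suc k"] by (intro p0_mono[OF G _ mu_le1[OF x]])
    also have "\<dots> \<le> D * p0 \<phi> (mu x (real n + real (Suc k)))" by (intro Dle) simp
    also have "\<dots> = D * u (k + Suc n)" by (simp add: u_def algebra_simps)
    finally show "p0 \<psi> (mu d (real (Suc k))) \<le> D * u (k + Suc n)" .
  qed
  also have "\<dots> = v n + D * (\<Sum>k<m-n. u (k + Suc n))" by (simp add: sum_distrib_left)
  also have "\<dots> \<le> v n + D * T n"
    unfolding T_def using D u0
    by (intro add_left_mono mult_left_mono sum_le_suminf summable_ignore_initial_segment[OF usum]) auto
  finally show ?thesis using B by (simp add: d_def)
qed

lemma cauchy: "\<And>e. e > 0 \<Longrightarrow> \<exists>M. \<forall>m\<ge>M. \<forall>n\<ge>M. N (\<lambda>t. y m t - y n t) < e"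
proof -
  fix e :: real assume e: "0 < e"
  have "(\<lambda>n. v n + D * T n) \<longlonglongrightarrow> 0 + D * 0" by (intro tendsto_intros v_to0 T_to0)
  then have "\<forall>\<^sub>F n in sequentially. v n + D * T n < e" using e by (simp add: order_tendstoD)
  then obtain M where M: "\<And>n. n \<ge> M \<Longrightarrow> v n + D * T n < e" unfolding eventually_sequentially by auto
  have "N (\<lambda>t. y m t - y n t) < e" if "m \<ge> M" "n \<ge> M" for m n
  proof (cases "n \<le> m")
    case True then show ?thesis using cb[OF True] M[OF that(2)] by linarith
  next
    case False
    then have "m \<le> n" by simp
    from cb[OF this] have "N (\<lambda>t. y n t - y m t) < e" using M[OF that(1)] by linarith
    moreover have "N (\<lambda>t. y m t - y n t) = N (\<lambda>t. y n t - y m t)"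
      using N_minus yF by blast
    ultimately show ?thesis by simp
  qed
  then show "\<exists>M. \<forall>m\<ge>M. \<forall>n\<ge>M. N (\<lambda>t. y m t - y n t) < e" by blast
qed

end


context emb begin

lemma main: "x \<in> F \<and> N x \<le> D * S"
proof -
  obtain z where z: "z \<in> F" and zlim: "(\<lambda>n. N (\<lambda>t. y n t - z t)) \<longlonglongrightarrow> 0"
    using complete[of y, OF conjunct1[OF yF] cauchy] by blast
  have zm: "meas01 z" using meas[OF z] .
  have dnF: "(\<lambda>t. y n t - z t) \<in> F" for n
    using add[OF conjunct1[OF yF] scal[OF z, of "-1"]] by simp
  have mud: "(\<lambda>n. mu (\<lambda>t. y n t - z t) \<eta>) \<longlonglongrightarrow> 0" if \<eta>: "0 < \<eta>" for \<eta>
  proof -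
    have "(\<lambda>n. p0 \<psi> (mu (\<lambda>t. y n t - z t) \<eta>)) \<longlonglongrightarrow> 0"
    proof (rule real_tendsto_sandwich[where f="\<lambda>_. 0" and h="\<lambda>n. N (\<lambda>t. y n t - z t) / \<eta>"])
      show "\<forall>\<^sub>F n in sequentially. 0 \<le> p0 \<psi> (mu (\<lambda>t. y n t - z t) \<eta>)"
        using p0_nonneg[OF G mu_le1[OF meas[OF dnF]]] by simp
      show "\<forall>\<^sub>F n in sequentially. p0 \<psi> (mu (\<lambda>t. y n t - z t) \<eta>) \<le> N (\<lambda>t. y n t - z t) / \<eta>"
        using level_lower[OF dnF \<eta>] \<eta> by (simp add: pos_le_divide_eq mult.commute)
      show "(\<lambda>n. N (\<lambda>t. y n t - z t) / \<eta>) \<longlonglongrightarrow> 0"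
        using tendsto_divide_zero[OF zlim] .
    qed simp
    then show ?thesis by (rule mu_from_p0[OF G]) (auto simp: mu_nonneg mu_le1 meas dnF)
  qed
  define w where "w = (\<lambda>t. \<bar>x t\<bar> - z t)"
  have wm: "meas01 w" unfolding w_def by (rule meas01_diff[OF meas01_abs[OF x] zm])
  have wnull: "{t\<in>{0..1}. 2 * \<eta> < \<bar>w t\<bar>} \<in> null_sets lebesgue" if \<eta>: "0 < \<eta>" for \<eta>
  proof -
    have le: "mu w (2 * \<eta>) \<le> mu x (real n) + mu (\<lambda>t. y n t - z t) \<eta>" for n
    proof -
      let ?A = "{t\<in>{0..1}. real n < \<bar>x t\<bar>}" and ?B = "{t\<in>{0..1}. \<eta> < \<bar>y n t - z t\<bar>}"
      have AB: "?A \<in> sets lebesgue" "?B \<in> sets lebesgue"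
        using meas01_set_less[OF x] meas01_set_less[OF meas[OF dnF[of n]]] by auto
      have "{t\<in>{0..1}. 2 * \<eta> < \<bar>w t\<bar>} \<subseteq> ?A \<union> ?B"
      proof
        fix t assume t: "t \<in> {t\<in>{0..1}. 2 * \<eta> < \<bar>w t\<bar>}"
        show "t \<in> ?A \<union> ?B"
        proof (cases "\<bar>x t\<bar> \<le> real n")
          case True
          then have "y n t = \<bar>x t\<bar>" by (simp add: y_def)
          then have "\<bar>y n t - z t\<bar> = \<bar>w t\<bar>" by (simp add: w_def)
          then show ?thesis using t \<eta> by simp
        next
          case False then show ?thesis using t by simp
        qed
      qed
      then have "mu w (2 * \<eta>) \<le> measure lebesgue (?A \<union> ?B)"
        unfolding mu_def using meas01_set_less[OF wm, of "2 * \<eta>"] AB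
        by (intro measure_mono_fmeasurable) (auto intro!: fmeas01)
      also have "\<dots> \<le> measure lebesgue ?A + measure lebesgue ?B"
        using AB by (rule measure_Un_le)
      finally show ?thesis by (simp add: mu_def)
    qed
    have "(\<lambda>n. mu x (real n) + mu (\<lambda>t. y n t - z t) \<eta>) \<longlonglongrightarrow> 0 + 0"
      by (intro tendsto_add mu_to0[OF x] mud \<eta>)
    then have "mu w (2 * \<eta>) \<le> 0 + 0"
      using le by (intro tendsto_le[OF trivial_limit_sequentially _ tendsto_const]) auto
    then have "mu w (2 * \<eta>) = 0" using mu_nonneg[of w "2 * \<eta>"] by simp
    then have "emeasure lebesgue {t\<in>{0..1}. 2 * \<eta> < \<bar>w t\<bar>} = 0" using emeasure_eq_mu[OF wm] by simp
    then show ?thesis using meas01_set_less[OF wm] by (intro null_setsI) auto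
  qed
  define Z where "Z = {t\<in>{0..1}. \<bar>x t\<bar> \<noteq> z t}"
  have Zeq: "Z = (\<Union>k. {t\<in>{0..1}. 2 * (1 / real (Suc k)) < \<bar>w t\<bar>})"
  proof safe
    fix t assume "t \<in> Z"
    then have t: "t \<in> {0..1}" "0 < \<bar>w t\<bar> / 2" by (auto simp: Z_def w_def)
    then obtain k where "inverse (real (Suc k)) < \<bar>w t\<bar> / 2" using reals_Archimedean by blast
    then have "2 * (1 / real (Suc k)) < \<bar>w t\<bar>" by (simp add: field_simps)
    then show "t \<in> (\<Union>k. {t\<in>{0..1}. 2 * (1 / real (Suc k)) < \<bar>w t\<bar>})" using t by auto
  next
    fix t k assume "t \<in> {0..1}" "2 * (1 / real (Suc k)) < \<bar>w t\<bar>"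
    moreover have "0 < 2 * (1 / real (Suc k))" by simp
    ultimately show "t \<in> Z" by (auto simp: Z_def w_def)
  qed
  have Zk: "{t\<in>{0..1}. 2 * (1 / real (Suc k)) < \<bar>w t\<bar>} \<in> null_sets lebesgue" for k
    by (rule wnull) simp
  have Znull: "Z \<in> null_sets lebesgue"
    unfolding Zeq by (rule null_sets_UN) (rule Zk)
  have Zsets: "Z \<in> sets lebesgue" using Znull by auto
  have eqm: "equimeasurable (\<lambda>t. \<bar>x t\<bar>) z"
    unfolding equimeasurable_def
  proof (intro allI impI)
    fix \<tau> :: real assume "0 < \<tau>"
    let ?A = "{t\<in>{0..1}. \<tau> < \<bar>\<bar>x t\<bar>\<bar>}" and ?B = "{t\<in>{0..1}. \<tau> < \<bar>z t\<bar>}"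
    have A: "?A \<in> sets lebesgue" using meas01_set_less[OF meas01_abs[OF x]] by simp
    have B: "?B \<in> sets lebesgue" using meas01_set_less[OF zm] by simp
    have "emeasure lebesgue ?A \<le> emeasure lebesgue (?B \<union> Z)"
      using B Zsets by (intro emeasure_mono) (auto simp: Z_def)
    also have "\<dots> = emeasure lebesgue ?B" using B Znull by (rule emeasure_Un_null_set)
    finally have 1: "emeasure lebesgue ?A \<le> emeasure lebesgue ?B" .
    have "emeasure lebesgue ?B \<le> emeasure lebesgue (?A \<union> Z)"
      using A Zsets by (intro emeasure_mono) (auto simp: Z_def)
    also have "\<dots> = emeasure lebesgue ?A" using A Znull by (rule emeasure_Un_null_set)
    finally have 2: "emeasure lebesgue ?B \<le> emeasure lebesgue ?A" .
    show "emeasure lebesgue ?A = emeasure lebesgue ?B" using 1 2 by (rule antisym)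
  qed
  have axF: "(\<lambda>t. \<bar>x t\<bar>) \<in> F \<and> N (\<lambda>t. \<bar>x t\<bar>) = N z"
    using equi[OF z meas01_abs[OF x] eqm] .
  have xF: "x \<in> F \<and> N x \<le> N (\<lambda>t. \<bar>x t\<bar>)"
    using ideal[OF conjunct1[OF axF] x] by simp
  have Nz: "N z \<le> D * S"
  proof -
    have le: "N z \<le> D * S + N (\<lambda>t. y n t - z t)" for n
    proof -
      have yn: "y n \<in> F" using yF by blast
      have zy: "(\<lambda>t. z t - y n t) \<in> F" using add[OF z scal[OF yn, of "-1"]] by simp
      have "N z = N (\<lambda>t. y n t + (z t - y n t))" by simp
      also have "\<dots> \<le> N (y n) + N (\<lambda>t. z t - y n t)" using tri[OF yn zy] .
      also have "N (\<lambda>t. z t - y n t) = N (\<lambda>t. y n t - z t)" using N_minus[OF z yn] .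
      finally show ?thesis using yF[of n] by linarith
    qed
    have "(\<lambda>n. D * S + N (\<lambda>t. y n t - z t)) \<longlonglongrightarrow> D * S + 0" by (intro tendsto_add tendsto_const zlim)
    then show ?thesis using le by (intro tendsto_le[OF trivial_limit_sequentially _ tendsto_const]) auto
  qed
  show ?thesis using xF axF Nz by linarith
qed

end


lemma lorentz_norm_zero: "lorentz_norm \<phi> (\<lambda>t. 0) = 0"
proof -
  have d: "distr01 (\<lambda>t. 0) \<tau> = 0" for \<tau> by (simp add: distr01_def)
  have "rearr (\<lambda>t. 0) s = 0" for s
  proof (cases "s \<le> 0")
    case True then show ?thesis by (simp add: rearr_def d bot_ennreal)
  next
    case False
    then have "{\<tau>. distr01 (\<lambda>t. 0) \<tau> < ennreal s} = UNIV" by (auto simp: d)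
    then show ?thesis using False by (simp add: rearr_def bot_ennreal)
  qed
  then show ?thesis by (simp add: lorentz_norm_def)
qed

lemma psi_to0:
  assumes Gp: "classG \<phi>" and G: "classG \<psi>" and lim: "((\<lambda>t. \<psi> t / \<phi> t) \<longlongrightarrow> 0) (at_right 0)"
  shows "(\<psi> \<longlongrightarrow> 0) (at_right 0)"
proof (rule real_tendsto_sandwich[where f="\<lambda>_. 0" and h="\<lambda>t. (\<psi> t / \<phi> t) * \<phi> 1"])
  have ev: "\<forall>\<^sub>F t in at_right 0. 0 < t \<and> t < (1::real)"
    unfolding eventually_at_right[OF zero_less_one] by (intro exI[of _ 1]) auto
  show "\<forall>\<^sub>F t in at_right 0. 0 \<le> \<psi> t"
    using ev by eventually_elim (use classG_pos[OF G] in \<open>auto intro: less_imp_le\<close>)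
  show "\<forall>\<^sub>F t in at_right 0. \<psi> t \<le> (\<psi> t / \<phi> t) * \<phi> 1"
    using ev
  proof eventually_elim
    case (elim t)
    have p: "0 < \<phi> t" "0 < \<psi> t" using classG_pos[OF Gp] classG_pos[OF G] elim by auto
    have "\<phi> t \<le> \<phi> 1" using classG_mono[OF Gp] elim by auto
    then have "(\<psi> t / \<phi> t) * \<phi> t \<le> (\<psi> t / \<phi> t) * \<phi> 1" using p by (intro mult_left_mono) auto
    then show ?case using p by simp
  qed
  show "((\<lambda>t. \<psi> t / \<phi> t * \<phi> 1) \<longlongrightarrow> 0) (at_right 0)"
    using tendsto_mult[OF lim tendsto_const[of "\<phi> 1"]] by simp
qed simp

lemma ratio_small:
  assumes Gp: "classG \<phi>" and lim: "((\<lambda>t. \<psi> t / \<phi> t) \<longlongrightarrow> 0) (at_right 0)" and c: "0 < c"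
  shows "\<exists>\<delta>>0. \<delta> \<le> 1 \<and> (\<forall>a. 0 < a \<longrightarrow> a < \<delta> \<longrightarrow> \<psi> a \<le> c * \<phi> a)"
proof -
  have "\<forall>\<^sub>F t in at_right 0. dist (\<psi> t / \<phi> t) 0 < c" using tendstoD[OF lim c] .
  then obtain b where b: "0 < b" "\<And>t. 0 < t \<Longrightarrow> t < b \<Longrightarrow> dist (\<psi> t / \<phi> t) 0 < c"
    unfolding eventually_at_right[OF zero_less_one] by auto
  define \<delta> where "\<delta> = min b 1"
  have "\<psi> a \<le> c * \<phi> a" if a: "0 < a" "a < \<delta>" for a
  proof -
    have p: "0 < \<phi> a" using classG_pos[OF Gp] a by (auto simp: \<delta>_def)
    have "\<bar>\<psi> a / \<phi> a\<bar> < c" using b(2)[of a] a by (simp add: \<delta>_def dist_real_def)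
    then have "\<psi> a / \<phi> a < c" by linarith
    then show ?thesis using p by (simp add: pos_divide_less_eq less_imp_le)
  qed
  then show ?thesis using b by (intro exI[of _ \<delta>]) (auto simp: \<delta>_def)
qed

lemma ratio_global:
  assumes Gp: "classG \<phi>" and G: "classG \<psi>" and lim: "((\<lambda>t. \<psi> t / \<phi> t) \<longlongrightarrow> 0) (at_right 0)"
  shows "\<exists>C\<ge>0. \<forall>a. 0 < a \<longrightarrow> a \<le> 1 \<longrightarrow> \<psi> a \<le> C * \<phi> a"
proof -
  obtain \<delta> where d: "0 < \<delta>" "\<delta> \<le> 1" "\<And>a. 0 < a \<Longrightarrow> a < \<delta> \<Longrightarrow> \<psi> a \<le> 1 * \<phi> a"
    using ratio_small[OF Gp lim zero_less_one] by blast
  define d' where "d' = \<delta> / 2"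
  have d': "0 < d'" "d' < \<delta>" "d' \<le> 1" using d by (auto simp: d'_def)
  have pd: "0 < \<phi> d'" using classG_pos[OF Gp] d' by auto
  define C where "C = max 1 (\<psi> 1 / \<phi> d')"
  have "\<psi> a \<le> C * \<phi> a" if a: "0 < a" "a \<le> 1" for a
  proof (cases "a < \<delta>")
    case True
    then have "\<psi> a \<le> 1 * \<phi> a" using d(3) a by blast
    also have "\<dots> \<le> C * \<phi> a" using classG_pos[OF Gp, of a] a by (intro mult_right_mono) (auto simp: C_def)
    finally show ?thesis .
  next
    case False
    then have "d' \<le> a" using d' by linarith
    have "\<psi> a \<le> \<psi> 1" using classG_mono[OF G a(1) a(2)] by simp
    also have "\<dots> = (\<psi> 1 / \<phi> d') * \<phi> d'" using pd by simp
    also have "\<dots> \<le> C * \<phi> a"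
      using classG_mono[OF Gp d'(1) \<open>d' \<le> a\<close> a(2)] pd classG_pos[OF G, of 1]
      by (intro mult_mono) (auto simp: C_def)
    finally show ?thesis .
  qed
  then show ?thesis by (intro exI[of _ C]) (auto simp: C_def)
qed

theorem theorem1:
  fixes \<phi> \<psi> :: "real \<Rightarrow> real"
    and F :: "(real \<Rightarrow> real) set" and N :: "(real \<Rightarrow> real) \<Rightarrow> real"
  assumes "classG \<phi>" and "classG \<psi>"
    and "((\<lambda>t. \<psi> t / \<phi> t) \<longlongrightarrow> 0) (at_right 0)"
    and "symmetric_space F N"
    and "has_fundamental_function F N \<psi>"
  shows "lorentz_space \<phi> \<subseteq> F \<and> inclusion_DSS \<phi> F N"
proof -
  note Gp = assms(1) and G = assms(2) and lim = assms(3)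
  interpret sF F N \<psi> using assms(4,5,2) by unfold_locales
  have psi0: "(\<psi> \<longlongrightarrow> 0) (at_right 0)" by (rule psi_to0[OF Gp G lim])
  have emb_gen: "x \<in> F \<and> N x \<le> D * enn2real (lorentz_norm \<phi> x)"
    if x: "meas01 x" and fin: "lorentz_norm \<phi> x < top" and D: "0 \<le> D"
      and Dle: "\<And>\<tau>. 0 < \<tau> \<Longrightarrow> p0 \<psi> (mu x \<tau>) \<le> D * p0 \<phi> (mu x \<tau>)" for x D
  proof -
    interpret emb F N \<psi> \<phi> x D
      using assms(4,5,2) Gp psi0 x fin D Dle by unfold_locales auto
    show ?thesis using main by (simp add: S_def)
  qed
  obtain C where C: "0 \<le> C" "\<And>a. 0 < a \<Longrightarrow> a \<le> 1 \<Longrightarrow> \<psi> a \<le> C * \<phi> a"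
    using ratio_global[OF Gp G lim] by blast
  have Lsp: "meas01 x \<and> lorentz_norm \<phi> x < top" if "x \<in> lorentz_space \<phi>" for x
    using that by (simp add: lorentz_space_def infinity_ennreal_def)
  have part1: "x \<in> F \<and> N x \<le> C * enn2real (lorentz_norm \<phi> x)" if xL: "x \<in> lorentz_space \<phi>" for x
  proof (rule emb_gen)
    show "meas01 x" "lorentz_norm \<phi> x < top" using Lsp[OF xL] by auto
    show "0 \<le> C" by (rule C(1))
    fix \<tau> :: real assume "0 < \<tau>"
    show "p0 \<psi> (mu x \<tau>) \<le> C * p0 \<phi> (mu x \<tau>)"
      using C(2)[of "mu x \<tau>"] mu_le1[of x \<tau>] Lsp[OF xL] by (auto simp: p0_def)
  qed
  show ?thesis
    unfolding inclusion_DSS_def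
  proof (intro conjI)
    show "lorentz_space \<phi> \<subseteq> F" using part1 by blast
    show "\<exists>C. \<forall>x\<in>lorentz_space \<phi>. ennreal (N x) \<le> ennreal C * lorentz_norm \<phi> x"
    proof (intro exI[of _ C] ballI)
      fix x assume xL: "x \<in> lorentz_space \<phi>"
      define S where "S = enn2real (lorentz_norm \<phi> x)"
      have LS: "lorentz_norm \<phi> x = ennreal S" using Lsp[OF xL] by (simp add: S_def ennreal_enn2real)
      have "ennreal (N x) \<le> ennreal (C * S)" using part1[OF xL] by (intro ennreal_leI) (simp add: S_def)
      also have "\<dots> = ennreal C * lorentz_norm \<phi> x" using C(1) by (simp add: LS ennreal_mult')
      finally show "ennreal (N x) \<le> ennreal C * lorentz_norm \<phi> x" .
    qed
    show "\<not> (\<exists>xs. (\<forall>n. xs n \<in> lorentz_space \<phi>) \<and>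
            (\<forall>n. \<not> (AE t in lebesgue_on {0..1}. xs n t = 0)) \<and>
            (\<forall>m n. m \<noteq> n \<longrightarrow> (AE t in lebesgue_on {0..1}. xs m t * xs n t = 0)) \<and>
            (\<exists>c>0. \<forall>z\<in>lorentz_closed_span \<phi> xs. ennreal c * lorentz_norm \<phi> z \<le> ennreal (N z)))"
    proof (rule notI, elim exE conjE)
      fix xs c
      assume xsL: "\<forall>n. xs n \<in> lorentz_space \<phi>"
        and nz: "\<forall>n. \<not> (AE t in lebesgue_on {0..1}. xs n t = 0)"
        and disj: "\<forall>m n. m \<noteq> n \<longrightarrow> (AE t in lebesgue_on {0..1}. xs m t * xs n t = 0)"
        and c: "0 < c" and cspan: "\<forall>z\<in>lorentz_closed_span \<phi> xs. ennreal c * lorentz_norm \<phi> z \<le> ennreal (N z)"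
      obtain \<delta> where \<delta>: "0 < \<delta>" "\<delta> \<le> 1" "\<And>a. 0 < a \<Longrightarrow> a < \<delta> \<Longrightarrow> \<psi> a \<le> (c/2) * \<phi> a"
        using ratio_small[OF Gp lim, of "c/2"] c by auto
      define A where "A n = {t\<in>{0..1}. xs n t \<noteq> 0}" for n
      have xsm: "meas01 (xs n)" for n using Lsp xsL by blast
      have Asets: "A n \<in> sets lebesgue" "A n \<subseteq> {0..1}" for n
        using meas01_set_neq[OF xsm] by (auto simp: A_def)
      have "\<exists>n. measure lebesgue (A n) < \<delta>"
      proof (rule ccontr)
        assume "\<not> (\<exists>n. measure lebesgue (A n) < \<delta>)"
        then have big: "\<delta> \<le> measure lebesgue (A n)" for n by (simp add: not_less)
        obtain K :: nat where K: "1 < real K * \<delta>" using ex_less_of_nat_mult[OF \<delta>(1)] by blast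
        have pw: "pairwise (\<lambda>i j. AE t in lebesgue. t \<notin> A i \<or> t \<notin> A j) {..<K}"
          unfolding pairwise_def
        proof (intro ballI impI)
          fix i j assume "i \<in> {..<K}" "j \<in> {..<K}" "i \<noteq> j"
          then have "AE t in lebesgue_on {0..1}. xs i t * xs j t = 0" using disj by blast
          then have "AE t in lebesgue. t \<in> {0..1} \<longrightarrow> xs i t * xs j t = 0"
            by (subst (asm) AE_restrict_space_iff) auto
          then show "AE t in lebesgue. t \<notin> A i \<or> t \<notin> A j"
            by eventually_elim (auto simp: A_def)
        qed
        have "measure lebesgue (\<Union>n\<in>{..<K}. A n) = (\<Sum>n<K. measure lebesgue (A n))"
          using Asets pw by (intro measure_UNION_AE) (auto intro: fmeas01)
        also have "\<dots> \<ge> real K * \<delta>"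
          using sum_bounded_below[of "{..<K}" \<delta> "\<lambda>n. measure lebesgue (A n)"] big by simp
        finally have "real K * \<delta> \<le> measure lebesgue (\<Union>n\<in>{..<K}. A n)" .
        moreover have "measure lebesgue (\<Union>n\<in>{..<K}. A n) \<le> 1"
          using Asets by (intro measure_sub01_le1) auto
        ultimately show False using K by linarith
      qed
      then obtain n where n: "measure lebesgue (A n) < \<delta>" by blast
      define x where "x = xs n"
      have xL: "x \<in> lorentz_space \<phi>" using xsL by (simp add: x_def)
      have xm: "meas01 x" and fin: "lorentz_norm \<phi> x < top" using Lsp[OF xL] by auto
      define S where "S = enn2real (lorentz_norm \<phi> x)"
      have LS: "lorentz_norm \<phi> x = ennreal S" using fin by (simp add: S_def ennreal_enn2real)
      have S0: "0 \<le> S" by (simp add: S_def)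
      have mux: "mu x \<tau> \<le> measure lebesgue (A n)" if "0 \<le> \<tau>" for \<tau>
        unfolding mu_def using that meas01_set_less[OF xm, of \<tau>] Asets[of n]
        by (intro measure_mono_fmeasurable) (auto simp: A_def x_def intro!: fmeas01)
      have up: "x \<in> F \<and> N x \<le> (c/2) * S"
        unfolding S_def
      proof (rule emb_gen[OF xm fin])
        show "0 \<le> c / 2" using c by simp
        fix \<tau> :: real assume \<tau>: "0 < \<tau>"
        show "p0 \<psi> (mu x \<tau>) \<le> c / 2 * p0 \<phi> (mu x \<tau>)"
        proof (cases "mu x \<tau> \<le> 0")
          case True then show ?thesis by (simp add: p0_def)
        next
          case False
          then have "0 < mu x \<tau>" "mu x \<tau> < \<delta>" using mux[of \<tau>] \<tau> n by auto
          then show ?thesis using \<delta>(3) False by (simp add: p0_def)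
        qed
      qed
      have span: "x \<in> lorentz_closed_span \<phi> xs"
        unfolding lorentz_closed_span_def
      proof (intro CollectI conjI allI impI xL)
        fix e :: real assume e: "0 < e"
        have sum: "(\<Sum>i<Suc n. (if i = n then 1 else 0) * xs i t) = xs n t" for t
        proof -
          have "(\<Sum>i<Suc n. (if i = n then 1 else 0) * xs i t) = (\<Sum>i<Suc n. if i = n then xs i t else 0)"
            by (intro sum.cong) auto
          also have "\<dots> = xs n t" by (subst sum.delta) auto
          finally show ?thesis .
        qed
        have "lorentz_norm \<phi> (\<lambda>t. x t - (\<Sum>i<Suc n. (if i = n then 1 else 0) * xs i t)) = 0"
          using lorentz_norm_zero by (simp add: sum x_def)
        then show "\<exists>m cc. lorentz_norm \<phi> (\<lambda>t. x t - (\<Sum>i<m. cc i * xs i t)) < ennreal e"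
          using e by (intro exI[of _ "Suc n"] exI[of _ "\<lambda>i. if i = n then 1 else 0"]) simp
      qed
      have "ennreal c * lorentz_norm \<phi> x \<le> ennreal (N x)" using cspan span by blast
      then have "ennreal (c * S) \<le> ennreal (N x)"
        using c by (simp add: LS ennreal_mult')
      then have lo: "c * S \<le> N x" using nonneg[of x] up by (simp add: ennreal_le_iff)
      have S00: "S = 0"
      proof -
        have "c * S \<le> (c/2) * S" using lo up by linarith
        then have "c * S \<le> 0" by linarith
        then show ?thesis using c S0 by (simp add: mult_le_0_iff)
      qed
      obtain k :: nat where k: "0 < mu x (1 / real (Suc k))"
      proof (rule ccontr)
        assume "\<not> thesis"
        then have z: "mu x (1 / real (Suc k)) = 0" for k
          using that[of k] mu_nonneg[of x "1 / real (Suc k)"] \<open>\<not> thesis\<close> by linarith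
        define Z where "Z = {t\<in>{0..1}. x t \<noteq> 0}"
        have Zeq: "Z = (\<Union>k. {t\<in>{0..1}. 1 / real (Suc k) < \<bar>x t\<bar>})"
        proof safe
          fix t assume "t \<in> Z"
          then have t: "t \<in> {0..1}" "0 < \<bar>x t\<bar>" by (auto simp: Z_def)
          then obtain k where "inverse (real (Suc k)) < \<bar>x t\<bar>" using reals_Archimedean by blast
          then show "t \<in> (\<Union>k. {t\<in>{0..1}. 1 / real (Suc k) < \<bar>x t\<bar>})" using t by (auto simp: field_simps)
        next
          fix t k assume "t \<in> {0..1}" "1 / real (Suc k) < \<bar>x t\<bar>"
          moreover have "0 < 1 / real (Suc k)" by simp
          ultimately show "t \<in> Z" by (auto simp: Z_def)
        qed
        have Zk: "{t\<in>{0..1}. 1 / real (Suc k) < \<bar>x t\<bar>} \<in> null_sets lebesgue" for k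
          using emeasure_eq_mu[OF xm, of "1 / real (Suc k)"] z[of k] meas01_set_less[OF xm]
          by (intro null_setsI) auto
        have Znull: "Z \<in> null_sets lebesgue" unfolding Zeq by (rule null_sets_UN) (rule Zk)
        have "AE t in lebesgue. t \<in> {0..1} \<longrightarrow> x t = 0"
          using AE_not_in[OF Znull] by eventually_elim (auto simp: Z_def)
        then have "AE t in lebesgue_on {0..1}. x t = 0"
          by (subst AE_restrict_space_iff) auto
        then show False using nz by (simp add: x_def)
      qed
      define h where "h = 1 / real (Suc k)"
      have h: "0 < h" by (simp add: h_def)
      have "ennreal (\<Sum>j\<in>{1..1}. h * p0 \<phi> (mu x (real j * h))) \<le> ennreal S"
        using lorentz_lower[OF Gp xm h, of 1] LS by simp
      then have "h * p0 \<phi> (mu x h) \<le> S" using S0 by (simp add: ennreal_le_iff)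
      moreover have "0 < p0 \<phi> (mu x h)"
        using k classG_pos[OF Gp, of "mu x h"] mu_le1[OF xm, of h] by (simp add: p0_def h_def)
      ultimately have "0 < S" using h by (meson mult_pos_pos order_less_le_trans)
      then show False using S00 by simp
    qed
  qed
qed


end
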